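(* Let $(K_n,\Sigma)$ be a signed complete graph, and let $\mathcal{C}$ be a set of signed graphs $(G,\Sigma')$ with $G$ a spanning subgraph of $K_n$ such that: (i) $(K_n,\Sigma')\in\mathcal{C}$ if and only if $\Sigma'=\Sigma$; (ii) for each $(G,\Sigma')\in\mathcal{C}$ with $G\neq K_n$, there is an edge $vw\in E(K_n)\setminus E(G)$ such that $(G+vw,\Sigma')\in\mathcal{C}$ or $(G+vw,\Sigma'\cup\{vw\})\in\mathcal{C}$; (iii) for each $(G,\Sigma')\in\mathcal{C}$ and each $vw\in E(G)$, $(G\setminus vw,\Sigma'\setminus\{vw\})\in\mathcal{C}$ if and only if spectral integral variation occurs under the addition of $vw$ to $(G\setminus vw,\Sigma'\setminus\{vw\})$ with the same parity as in $(K_n,\Sigma)$. Then a signed graph (with underlying graph a spanning subgraph of $K_n$) is integrally $\Sigma$-completable if and only if it belongs to $\mathcal{C}$.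
   Context: All graphs are finite and simple. A signed graph is a pair $(G,\Sigma)$ with $\Sigma\subseteq E(G)$; edges in $\Sigma$ are odd, others even. The signed Laplacian is $L(G,\Sigma)=D(G)-A(G,\Sigma)$, $D(G)$ the diagonal degree matrix, $A(G,\Sigma)$ having $(i,j)$-entry $1$ for an even edge, $-1$ for an odd edge, $0$ otherwise. Adding a new even (resp. odd) edge $vw$ to $(G,\Sigma)$ gives $(G+vw,\Sigma)$ (resp. $(G+vw,\Sigma\cup\{vw\})$); adding it "with the same parity as in $(K_n,\Sigma)$" means odd if $vw\in\Sigma$ and even otherwise. Spectral integral variation occurs if, with eigenvalues in nondecreasing order, corresponding eigenvalues of the signed Laplacians before and after differ by integers. $G\setminus vw$ is $G$ with edge $vw$ removed. A signed graph $(G,\Sigma')$ with $V(G)=V(K_n)$ is integrally $\Sigma$-completable if there is a sequence $(G_0,\Sigma_0)=(G,\Sigma'),\dots,(G_m,\Sigma_m)=(K_n,\Sigma)$ such that for each $i\in\{1,\dots,m\}$, $(G_i,\Sigma_i)$ is obtained from $(G_{i-1},\Sigma_{i-1})$ by adding a new (odd or even) edge $v_iw_i\in E(K_n)\setminus E(G_{i-1})$ under which spectral integral variation occurs. *)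

theory Defs
  imports "Jordan_Normal_Form.Char_Poly" "HOL-Library.Multiset"
begin

text \<open>Vertices of K_n are 0,...,n-1. An edge is a 2-element set of vertices.
  A signed graph is a pair (E, S) of its edge set E and its set S of odd edges (S a subset of E).\<close>

definition Kn_edges :: "nat \<Rightarrow> nat set set" where
  "Kn_edges n = {{i, j} | i j. i < n \<and> j < n \<and> i \<noteq> j}"

definition is_signed_spanning :: "nat \<Rightarrow> nat set set \<times> nat set set \<Rightarrow> bool" where
  "is_signed_spanning n GS = (fst GS \<subseteq> Kn_edges n \<and> snd GS \<subseteq> fst GS)"

definition degree_in :: "nat set set \<Rightarrow> nat \<Rightarrow> nat" where
  "degree_in E i = card {e \<in> E. i \<in> e}"

definition signed_adj :: "nat \<Rightarrow> nat set set \<times> nat set set \<Rightarrow> real mat" where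
  "signed_adj n GS = mat n n (\<lambda>(i, j).
     if i \<noteq> j \<and> {i, j} \<in> fst GS then (if {i, j} \<in> snd GS then -1 else 1) else 0)"

definition degree_mat :: "nat \<Rightarrow> nat set set \<Rightarrow> real mat" where
  "degree_mat n E = mat n n (\<lambda>(i, j). if i = j then real (degree_in E i) else 0)"

definition signed_laplacian :: "nat \<Rightarrow> nat set set \<times> nat set set \<Rightarrow> real mat" where
  "signed_laplacian n GS = degree_mat n (fst GS) - signed_adj n GS"

text \<open>Eigenvalues (with multiplicity) in nondecreasing order: the sorted list of roots of the
  characteristic polynomial. For a real symmetric matrix it has exactly n entries.\<close>
definition sorted_eigenvalues :: "real mat \<Rightarrow> real list" where
  "sorted_eigenvalues A = sorted_list_of_multiset (proots (char_poly A))"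

definition spectral_integral_variation ::
  "nat \<Rightarrow> nat set set \<times> nat set set \<Rightarrow> nat set set \<times> nat set set \<Rightarrow> bool" where
  "spectral_integral_variation n GS GS' =
    (let l = sorted_eigenvalues (signed_laplacian n GS);
         l' = sorted_eigenvalues (signed_laplacian n GS')
     in length l = length l' \<and> (\<forall>i < length l. l' ! i - l ! i \<in> \<int>))"

definition add_edge_step :: "nat \<Rightarrow> nat set set \<times> nat set set \<Rightarrow> nat set set \<times> nat set set \<Rightarrow> bool" where
  "add_edge_step n GS GS' =
    (\<exists>e \<in> Kn_edges n - fst GS.
       (GS' = (fst GS \<union> {e}, snd GS) \<or> GS' = (fst GS \<union> {e}, snd GS \<union> {e}))
       \<and> spectral_integral_variation n GS GS')"

definition integrally_completable ::
  "nat \<Rightarrow> nat set set \<Rightarrow> nat set set \<times> nat set set \<Rightarrow> bool" where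
  "integrally_completable n \<Sigma> GS =
    (\<exists>m (seq :: nat \<Rightarrow> nat set set \<times> nat set set). seq 0 = GS \<and> seq m = (Kn_edges n, \<Sigma>) \<and>
       (\<forall>i \<in> {1..m}. add_edge_step n (seq (i - 1)) (seq i)))"

end

theory Submission
  imports Defs
begin

lemma finite_Kn: "finite (Kn_edges n)"
proof -
  have "Kn_edges n \<subseteq> Pow {..<n}" unfolding Kn_edges_def by auto
  then show ?thesis by (meson finite_Pow_iff finite_lessThan finite_subset)
qed

lemma step_spanning:
  assumes "is_signed_spanning n GS" "add_edge_step n GS GS'"
  shows "is_signed_spanning n GS'"
  using assms unfolding is_signed_spanning_def add_edge_step_def by auto

lemma compl_cons:
  assumes "add_edge_step n GS GS'" "integrally_completable n \<Sigma> GS'"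
  shows "integrally_completable n \<Sigma> GS"
proof -
  obtain m :: nat and seq :: "nat \<Rightarrow> nat set set \<times> nat set set" where s: "seq 0 = GS'" "seq m = (Kn_edges n, \<Sigma>)"
    "\<forall>i \<in> {1..m}. add_edge_step n (seq (i - 1)) (seq i)"
    using assms(2) unfolding integrally_completable_def by blast
  define seq' where "seq' = (\<lambda>i. if i = 0 then GS else seq (i - 1))"
  have "\<forall>i \<in> {1..Suc m}. add_edge_step n (seq' (i - 1)) (seq' i)"
  proof
    fix i assume "i \<in> {1..Suc m}"
    show "add_edge_step n (seq' (i - 1)) (seq' i)"
    proof (cases "i = 1")
      case True then show ?thesis using s assms(1) unfolding seq'_def by simp
    next
      case False
      then obtain j where j: "i = Suc j" "j \<in> {1..m}" using \<open>i \<in> {1..Suc m}\<close>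
        by (cases i) auto
      then have "add_edge_step n (seq (j - 1)) (seq j)" using s(3) by blast
      moreover have "seq' (i - 1) = seq (j - 1)" "seq' i = seq j" using j unfolding seq'_def by auto
      ultimately show ?thesis by simp
    qed
  qed
  moreover have "seq' 0 = GS" "seq' (Suc m) = (Kn_edges n, \<Sigma>)" using s unfolding seq'_def by auto
  ultimately show ?thesis unfolding integrally_completable_def by blast
qed

theorem lemma3p9:
  fixes n :: nat and \<Sigma> :: "nat set set"
    and C :: "(nat set set \<times> nat set set) set"
  assumes sigma: "\<Sigma> \<subseteq> Kn_edges n"
    and C_graphs: "\<forall>GS \<in> C. is_signed_spanning n GS"
    and i: "\<forall>\<Sigma>'. \<Sigma>' \<subseteq> Kn_edges n \<longrightarrow> ((Kn_edges n, \<Sigma>') \<in> C \<longleftrightarrow> \<Sigma>' = \<Sigma>)"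
    and ii: "\<forall>G \<Sigma>'. (G, \<Sigma>') \<in> C \<and> G \<noteq> Kn_edges n \<longrightarrow>
              (\<exists>e \<in> Kn_edges n - G. (G \<union> {e}, \<Sigma>') \<in> C \<or> (G \<union> {e}, \<Sigma>' \<union> {e}) \<in> C)"
    and iii: "\<forall>G \<Sigma>'. \<forall>e \<in> G. (G, \<Sigma>') \<in> C \<longrightarrow>
              ((G - {e}, \<Sigma>' - {e}) \<in> C \<longleftrightarrow>
                spectral_integral_variation n (G - {e}, \<Sigma>' - {e})
                  (G, (\<Sigma>' - {e}) \<union> (if e \<in> \<Sigma> then {e} else {})))"
  shows "\<forall>GS. is_signed_spanning n GS \<longrightarrow>
           (integrally_completable n \<Sigma> GS \<longleftrightarrow> GS \<in> C)"
proof -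
  have KC: "(Kn_edges n, \<Sigma>) \<in> C" using i sigma by blast
  have sig: "S = \<Sigma> \<inter> G" if "(G, S) \<in> C" for G S
  proof -
    have "\<forall>G S. card (Kn_edges n - G) = k \<longrightarrow> (G, S) \<in> C \<longrightarrow> S = \<Sigma> \<inter> G" for k
    proof (induction k rule: less_induct)
      case (less k)
      show ?case
      proof (intro allI impI)
        fix G S assume ck: "card (Kn_edges n - G) = k" and GC: "(G, S) \<in> C"
        have "is_signed_spanning n (G, S)" using C_graphs GC by blast
        then have sp: "G \<subseteq> Kn_edges n" "S \<subseteq> G" unfolding is_signed_spanning_def by auto
        show "S = \<Sigma> \<inter> G"
        proof (cases "G = Kn_edges n")
          case True
          then have "S = \<Sigma>" using i GC sp by auto
          then show ?thesis using True sigma by auto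
        next
          case False
          then obtain e S' where e: "e \<in> Kn_edges n - G" "(G \<union> {e}, S') \<in> C"
            "S' = S \<or> S' = S \<union> {e}" using ii GC by blast
          have "Kn_edges n - (G \<union> {e}) \<subset> Kn_edges n - G" using e by auto
          then have "card (Kn_edges n - (G \<union> {e})) < k"
            using ck finite_Kn by (metis finite_Diff psubset_card_mono)
          then have "S' = \<Sigma> \<inter> (G \<union> {e})" using less e by blast
          then show ?thesis using e sp by auto
        qed
      qed
    qed
    then show ?thesis using that by blast
  qed
  have stepC: "add_edge_step n (G, \<Sigma> \<inter> G) (G \<union> {e}, \<Sigma> \<inter> (G \<union> {e}))"
    if "e \<in> Kn_edges n - G" "(G \<union> {e}, \<Sigma> \<inter> (G \<union> {e})) \<in> C" "(G, \<Sigma> \<inter> G) \<in> C" for G e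
  proof -
    have eq1: "(G \<union> {e} - {e}, \<Sigma> \<inter> (G \<union> {e}) - {e}) = (G, \<Sigma> \<inter> G)" using that(1) by auto
    have eq2: "(\<Sigma> \<inter> (G \<union> {e}) - {e}) \<union> (if e \<in> \<Sigma> then {e} else {}) = \<Sigma> \<inter> (G \<union> {e})"
      using that(1) by auto
    have "spectral_integral_variation n (G, \<Sigma> \<inter> G) (G \<union> {e}, \<Sigma> \<inter> (G \<union> {e}))"
      using iii[rule_format, of e "G \<union> {e}" "\<Sigma> \<inter> (G \<union> {e})"] that(2,3) eq1 eq2 by simp
    then show ?thesis unfolding add_edge_step_def using that(1) by (cases "e \<in> \<Sigma>") auto
  qed
  have bwd: "\<forall>G S. card (Kn_edges n - G) = k \<longrightarrow> (G, S) \<in> C \<longrightarrow> integrally_completable n \<Sigma> (G, S)" for k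
  proof (induction k rule: less_induct)
    case (less k)
    show ?case
    proof (intro allI impI)
      fix G S assume ck: "card (Kn_edges n - G) = k" and GC: "(G, S) \<in> C"
      have "is_signed_spanning n (G, S)" using C_graphs GC by blast
        then have sp: "G \<subseteq> Kn_edges n" "S \<subseteq> G" unfolding is_signed_spanning_def by auto
      have S: "S = \<Sigma> \<inter> G" using sig GC by blast
      show "integrally_completable n \<Sigma> (G, S)"
      proof (cases "G = Kn_edges n")
        case True
        then have "(G, S) = (Kn_edges n, \<Sigma>)" using S sigma by auto
        then show ?thesis unfolding integrally_completable_def
          by (intro exI[of _ 0] exI[of _ "\<lambda>_. (G, S)"]) auto
      next
        case False
        then obtain e S' where e: "e \<in> Kn_edges n - G" "(G \<union> {e}, S') \<in> C"
          using ii GC by blast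
        have S': "S' = \<Sigma> \<inter> (G \<union> {e})" using sig e by blast
        have "Kn_edges n - (G \<union> {e}) \<subset> Kn_edges n - G" using e by auto
        then have "card (Kn_edges n - (G \<union> {e})) < k"
          using ck finite_Kn by (metis finite_Diff psubset_card_mono)
        then have c: "integrally_completable n \<Sigma> (G \<union> {e}, S')" using less e by blast
        have "add_edge_step n (G, S) (G \<union> {e}, S')"
          using stepC[of e G] e S S' GC by blast
        then show ?thesis using compl_cons c by blast
      qed
    qed
  qed
  have fwd: "\<forall>GS (seq :: nat \<Rightarrow> nat set set \<times> nat set set). seq 0 = GS \<and> seq m = (Kn_edges n, \<Sigma>) \<and>
       (\<forall>i \<in> {1..m}. add_edge_step n (seq (i - 1)) (seq i)) \<longrightarrow> is_signed_spanning n GS \<longrightarrow> GS \<in> C" for m :: nat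
  proof (induction m)
    case 0
    then show ?case using KC by auto
  next
    case (Suc m)
    show ?case
    proof (intro allI impI)
      fix GS seq
      assume a: "seq 0 = GS \<and> seq (Suc m) = (Kn_edges n, \<Sigma>) \<and>
       (\<forall>i \<in> {1..Suc m}. add_edge_step n (seq (i - 1)) (seq i))" and sp: "is_signed_spanning n GS"
      have "1 \<in> {1..Suc m}" by simp
      then have "add_edge_step n (seq (1 - 1)) (seq 1)" using a by blast
      then have st: "add_edge_step n GS (seq 1)" using a by simp
      have sp1: "is_signed_spanning n (seq 1)" using step_spanning sp st by blast
      have "\<forall>i \<in> {1..m}. add_edge_step n ((\<lambda>j. seq (Suc j)) (i - 1)) ((\<lambda>j. seq (Suc j)) i)"
      proof
        fix i assume "i \<in> {1..m}"
        then have "Suc i \<in> {1..Suc m}" by auto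
        then have "add_edge_step n (seq (Suc i - 1)) (seq (Suc i))" using a by blast
        then show "add_edge_step n ((\<lambda>j. seq (Suc j)) (i - 1)) ((\<lambda>j. seq (Suc j)) i)"
          using \<open>i \<in> {1..m}\<close> by (simp add: Suc_diff_le)
      qed
      then have C1: "seq 1 \<in> C" using Suc.IH[rule_format, of "\<lambda>j. seq (Suc j)" "seq 1"] sp1 a by simp
      obtain G S where GS: "GS = (G, S)" by (cases GS) auto
      obtain e where e: "e \<in> Kn_edges n - G"
        "seq 1 = (G \<union> {e}, S) \<or> seq 1 = (G \<union> {e}, S \<union> {e})"
        "spectral_integral_variation n GS (seq 1)"
        using st GS unfolding add_edge_step_def by auto
      have spG: "S \<subseteq> G" using sp GS unfolding is_signed_spanning_def by auto
      obtain S1 where S1: "seq 1 = (G \<union> {e}, S1)" using e by blast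
      have S1s: "S1 = \<Sigma> \<inter> (G \<union> {e})" using sig C1 S1 by simp
      have SS: "S = \<Sigma> \<inter> G" using S1s e(1,2) S1 spG by auto
      have eq1: "(G \<union> {e} - {e}, S1 - {e}) = (G, S)" using e(1) spG S1s SS by auto
      have eq2: "(S1 - {e}) \<union> (if e \<in> \<Sigma> then {e} else {}) = S1"
        using S1s by auto
      have "spectral_integral_variation n (G, S) (G \<union> {e}, S1)" using e(3) GS S1 by simp
      then show "GS \<in> C" using iii[rule_format, of e "G \<union> {e}" S1] C1 S1 eq1 eq2 GS by simp
    qed
  qed
  show ?thesis
  proof (intro allI impI iffI)
    fix GS assume "is_signed_spanning n GS" "integrally_completable n \<Sigma> GS"
    then show "GS \<in> C" using fwd unfolding integrally_completable_def by blast
  next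
    fix GS assume "GS \<in> C"
    then show "integrally_completable n \<Sigma> GS" using bwd by (metis prod.collapse)
  qed
qed

end
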